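(* For all $n,m,N\in\mathbb{Z}$ the following bilinear equations hold: \begin{align*} &(Q^{4n-8m+4}{\alpha_1}^{-4}{\alpha_2}^{4}-Q^{4n+4m}{\alpha_0}^{4}{\alpha_2}^{-4}) \left(\tau^{n,m}_{N}\right)^2 +Q^{n+m}\alpha_0{\alpha_2}^{-1}\tau^{n+1,m+1}_{N}\tau^{n-1,m-1}_{N} -Q^{n-2m+1}{\alpha_1}^{-1}\alpha_2\tau^{n,m+1}_{N}\tau^{n,m-1}_{N}=0,\\ &(Q^{4n+4m}{\alpha_0}^{4}{\alpha_2}^{-4}-Q^{-8n+4m-4}{\alpha_0}^{-4}{\alpha_1}^{4}) \left(\tau^{n,m}_{N}\right)^2 +Q^{-2n+m-1}{\alpha_0}^{-1}\alpha_1\tau^{n+1,m}_{N}\tau^{n-1,m}_{N} -Q^{n+m}\alpha_0{\alpha_2}^{-1}\tau^{n+1,m+1}_{N}\tau^{n-1,m-1}_{N}=0,\\ &(Q^{-8n+4m-4}{\alpha_0}^{-4}{\alpha_1}^{4}-Q^{4n-8m+4}{\alpha_1}^{-4}{\alpha_2}^{4}) \left(\tau^{n,m}_{N}\right)^2 -Q^{-2n+m-1}{\alpha_0}^{-1}\alpha_1\tau^{n+1,m}_{N}\tau^{n-1,m}_{N} +Q^{n-2m+1}{\alpha_1}^{-1}\alpha_2\tau^{n,m+1}_{N}\tau^{n,m-1}_{N}=0. \end{align*}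
   Context: Let $Q\in\mathbb{C}^\times$ be generic and let $\alpha_0,\alpha_1,\gamma$ be indeterminates; put $\alpha_2:=Q\alpha_0^{-1}\alpha_1^{-1}$, so $\alpha_0\alpha_1\alpha_2=Q$ (sixth roots of the usual parameters: $q=Q^6$, $a_i=\alpha_i^6$, $c=\gamma^6$). Let $\tau_i,\bar\tau_i$ ($i\in\mathbb{Z}/3\mathbb{Z}$) be six further indeterminates and $K=\mathbb{C}(\alpha_0,\alpha_1,\gamma,\tau_0,\tau_1,\tau_2,\bar\tau_0,\bar\tau_1,\bar\tau_2)$. Indices are taken mod 3. Define field automorphisms $s_0,s_1,s_2,\pi,w_0,w_1,r$ of $K$ (fixing $\mathbb{C}$): on parameters $s_i(\alpha_i)=\alpha_i^{-1}$, $s_i(\alpha_j)=\alpha_j\alpha_i$ ($j\neq i$), $\pi(\alpha_j)=\alpha_{j+1}$, $s_i(\gamma)=\pi(\gamma)=\gamma$; $w_0,w_1,r$ fix every $\alpha_j$, and $w_0(\gamma)=\gamma^{-1}$, $w_1(\gamma)=Q^{-2}\gamma^{-1}$, $r(\gamma)=Q^{-1}\gamma^{-1}$. With $u_i=Q^{-2}\gamma^{-4}\alpha_i^6$, $v_i=Q^{2}\gamma^{4}\alpha_i^6$: $s_i(\tau_i)=\dfrac{u_i\tau_{i+1}\bar\tau_{i-1}+\bar\tau_{i+1}\tau_{i-1}}{Q^{-1}\gamma^{-2}\alpha_i^{3}\,\bar\tau_i}$, $s_i(\bar\tau_i)=\dfrac{v_i\bar\tau_{i+1}\tau_{i-1}+\tau_{i+1}\bar\tau_{i-1}}{Q\gamma^{2}\alpha_i^{3}\,\tau_i}$,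 $s_i$ fixes $\tau_j,\bar\tau_j$ ($j\ne i$); $\pi(\tau_i)=\tau_{i+1}$, $\pi(\bar\tau_i)=\bar\tau_{i+1}$; $w_0(\tau_i)=\tau_i$, $w_0(\bar\tau_i)=\dfrac{\alpha_{i+1}^2(\bar\tau_i\tau_{i+1}\tau_{i+2}+u_{i-1}\tau_i\bar\tau_{i+1}\tau_{i+2}+u_{i+1}^{-1}\tau_i\tau_{i+1}\bar\tau_{i+2})}{\alpha_{i+2}^2\,\bar\tau_{i+1}\bar\tau_{i+2}}$; $w_1(\bar\tau_i)=\bar\tau_i$, $w_1(\tau_i)=\dfrac{\alpha_{i+1}^2(\tau_i\bar\tau_{i+1}\bar\tau_{i+2}+v_{i-1}\bar\tau_i\tau_{i+1}\bar\tau_{i+2}+v_{i+1}^{-1}\bar\tau_i\bar\tau_{i+1}\tau_{i+2})}{\alpha_{i+2}^2\,\tau_{i+1}\tau_{i+2}}$; $r(\tau_i)=\bar\tau_i$, $r(\bar\tau_i)=\tau_i$. Products of generators denote composition ($xy=x\circ y$). Set $T_1=\pi s_2s_1$, $T_2=s_1\pi s_2$, $T_4=rw_0$ (these commute), and define $\tau^{n,m}_N=T_1^{\,n}T_2^{\,m}T_4^{\,N}(\tau_1)$ for $n,m,N\in\mathbb{Z}$. *)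

theory Defs
  imports Complex_Main "HOL-Computational_Algebra.Polynomial" "HOL-Computational_Algebra.Fraction_Field"
begin

text \<open>K is built as an iterated rational function field C(x1)(x2)...(x9), which is
 isomorphic to the rational function field in nine indeterminates over C.
 Order of indeterminates: x1 = alpha0, x2 = alpha1, x3 = gamma, x4..x6 = tau0..tau2,
 x7..x9 = taubar0..taubar2.\<close>

type_synonym F1 = "complex poly fract"
type_synonym F2 = "F1 poly fract"
type_synonym F3 = "F2 poly fract"
type_synonym F4 = "F3 poly fract"
type_synonym F5 = "F4 poly fract"
type_synonym F6 = "F5 poly fract"
type_synonym F7 = "F6 poly fract"
type_synonym F8 = "F7 poly fract"
type_synonym K  = "F8 poly fract"

definition up :: "'a::idom \<Rightarrow> 'a poly fract" where
  "up c = Fract [:c:] 1"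

definition var :: "'a::idom poly fract" where
  "var = Fract [:0, 1:] 1"

definition cK :: "complex \<Rightarrow> K" where
  "cK c = up (up (up (up (up (up (up (up (up c))))))))"

definition X1 :: K where "X1 = up (up (up (up (up (up (up (up (var :: F1))))))))"
definition X2 :: K where "X2 = up (up (up (up (up (up (up (var :: F2)))))))"
definition X3 :: K where "X3 = up (up (up (up (up (up (var :: F3))))))"
definition X4 :: K where "X4 = up (up (up (up (up (var :: F4)))))"
definition X5 :: K where "X5 = up (up (up (up (var :: F5))))"
definition X6 :: K where "X6 = up (up (up (var :: F6)))"
definition X7 :: K where "X7 = up (up (var :: F7))"
definition X8 :: K where "X8 = up (var :: F8)"
definition X9 :: K where "X9 = (var :: K)"

definition gam :: K where "gam = X3"

definition tau :: "int \<Rightarrow> K" where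
  "tau i = (if i mod 3 = 0 then X4 else if i mod 3 = 1 then X5 else X6)"

definition taub :: "int \<Rightarrow> K" where
  "taub i = (if i mod 3 = 0 then X7 else if i mod 3 = 1 then X8 else X9)"

definition alpha :: "complex \<Rightarrow> int \<Rightarrow> K" where
  "alpha Q i = (if i mod 3 = 0 then X1 else if i mod 3 = 1 then X2
                else cK Q * inverse X1 * inverse X2)"

definition uu :: "complex \<Rightarrow> int \<Rightarrow> K" where
  "uu Q i = cK Q powi (-2) * gam powi (-4) * alpha Q i ^ 6"

definition vv :: "complex \<Rightarrow> int \<Rightarrow> K" where
  "vv Q i = cK Q ^ 2 * gam ^ 4 * alpha Q i ^ 6"

definition field_aut :: "(K \<Rightarrow> K) \<Rightarrow> bool" where
  "field_aut f \<longleftrightarrow> bij f \<and> (\<forall>x y. f (x + y) = f x + f y) \<and> (\<forall>x y. f (x * y) = f x * f y)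
     \<and> f 1 = 1 \<and> (\<forall>c. f (cK c) = cK c)"

definition zpow :: "('a \<Rightarrow> 'a) \<Rightarrow> int \<Rightarrow> 'a \<Rightarrow> 'a" where
  "zpow f n = (if 0 \<le> n then f ^^ nat n else (inv f) ^^ nat (- n))"

definition tauNM :: "(K \<Rightarrow> K) \<Rightarrow> (K \<Rightarrow> K) \<Rightarrow> (K \<Rightarrow> K) \<Rightarrow> int \<Rightarrow> int \<Rightarrow> int \<Rightarrow> K" where
  "tauNM T1 T2 T4 n m N = zpow T1 n (zpow T2 m (zpow T4 N (tau 1)))"

end

theory Submission
  imports Defs
begin


lemma fa_add: "field_aut f \<Longrightarrow> f (x + y) = f x + f y" by (simp add: field_aut_def)
lemma fa_mult: "field_aut f \<Longrightarrow> f (x * y) = f x * f y" by (simp add: field_aut_def)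
lemma fa_one: "field_aut f \<Longrightarrow> f 1 = 1" by (simp add: field_aut_def)
lemma fa_cK: "field_aut f \<Longrightarrow> f (cK c) = cK c" by (simp add: field_aut_def)
lemma fa_bij: "field_aut f \<Longrightarrow> bij f" by (simp add: field_aut_def)
lemma fa_zero: "field_aut f \<Longrightarrow> f 0 = 0"
proof -
  assume a: "field_aut f"
  have "f 0 = f 0 + f 0" using fa_add[OF a, of 0 0] by simp
  then show ?thesis by (metis add_cancel_right_right)
qed
lemma fa_minus: "field_aut f \<Longrightarrow> f (- x) = - f x"
proof -
  assume a: "field_aut f"
  have "f (x + - x) = f x + f (-x)" using fa_add[OF a] .
  then have "0 = f x + f (-x)" using fa_zero[OF a] by simp
  then show ?thesis by (simp add: eq_neg_iff_add_eq_0 add.commute)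
qed
lemma fa_diff: "field_aut f \<Longrightarrow> f (x - y) = f x - f y"
  using fa_add[of f x "-y"] fa_minus[of f y] by simp
lemma fa_inverse: "field_aut f \<Longrightarrow> f (inverse x) = inverse (f x)"
proof (cases "x = 0")
  case True assume a: "field_aut f" then show ?thesis using True fa_zero[OF a] by simp
next
  case False assume a: "field_aut f"
  have "f x * f (inverse x) = 1" using fa_mult[OF a, of x "inverse x", symmetric] fa_one[OF a] False by simp
  then show ?thesis by (metis inverse_unique)
qed
lemma fa_divide: "field_aut f \<Longrightarrow> f (x / y) = f x / f y"
  by (simp add: divide_inverse fa_mult fa_inverse)
lemma fa_power: "field_aut f \<Longrightarrow> f (x ^ n) = f x ^ n"
  by (induction n) (simp_all add: fa_one fa_mult)
lemma fa_powi: "field_aut f \<Longrightarrow> f (x powi n) = f x powi n"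
  by (simp add: power_int_def fa_power fa_inverse)
lemma fa_inj: "field_aut f \<Longrightarrow> inj f" using fa_bij bij_is_inj by blast
lemma fa_nz: "field_aut f \<Longrightarrow> x \<noteq> 0 \<Longrightarrow> f x \<noteq> 0"
  by (metis fa_zero fa_inj injD)
lemma fa_numeral: "field_aut f \<Longrightarrow> f (numeral k) = numeral k"
proof -
  assume a: "field_aut f"
  have "f (of_nat n) = of_nat n" for n
    by (induction n) (simp_all add: fa_zero[OF a] fa_one[OF a] fa_add[OF a])
  from this[of "numeral k"] show ?thesis by simp
qed

lemmas fa_simps = fa_add fa_mult fa_one fa_cK fa_zero fa_minus fa_diff fa_inverse fa_divide fa_power fa_powi fa_numeral

lemma field_aut_id: "field_aut id" by (simp add: field_aut_def)
lemma field_aut_comp: "field_aut f \<Longrightarrow> field_aut g \<Longrightarrow> field_aut (f \<circ> g)"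
  by (simp add: field_aut_def bij_comp)
lemma field_aut_inv: assumes a: "field_aut f" shows "field_aut (inv f)"
proof -
  have b: "bij f" using fa_bij[OF a] .
  have fi: "f (inv f y) = y" for y using b by (simp add: bij_is_surj surj_f_inv_f)
  have i: "inv f (f y) = y" for y using b by (simp add: bij_is_inj inv_f_f)
  show ?thesis unfolding field_aut_def
  proof (intro conjI allI)
    show "bij (inv f)" using b by (simp add: bij_imp_bij_inv)
    fix x y
    show "inv f (x + y) = inv f x + inv f y"
      by (metis fi i fa_add[OF a])
    show "inv f (x * y) = inv f x * inv f y"
      by (metis fi i fa_mult[OF a])
    show "inv f 1 = 1" by (metis i fa_one[OF a])
  next
    fix c show "inv f (cK c) = cK c" by (metis i fa_cK[OF a])
  qed
qed
lemma field_aut_funpow: "field_aut f \<Longrightarrow> field_aut (f ^^ n)"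
proof (induction n)
  case 0 then show ?case using field_aut_id[unfolded id_def] by simp
next
  case (Suc n)
  have "f ^^ Suc n = f \<circ> f ^^ n" by simp
  then show ?case using field_aut_comp[OF Suc.prems Suc.IH[OF Suc.prems]] by metis
qed
lemma field_aut_zpow: "field_aut f \<Longrightarrow> field_aut (zpow f n)"
  by (simp add: zpow_def field_aut_funpow field_aut_inv)

definition up_hom :: "('a::{plus,times,one} \<Rightarrow> K) \<Rightarrow> bool" where
  "up_hom e \<longleftrightarrow> (\<forall>x y. e (x + y) = e x + e y) \<and> (\<forall>x y. e (x * y) = e x * e y) \<and> e 1 = 1"

definition subf :: "K set \<Rightarrow> bool" where
  "subf S \<longleftrightarrow> 0 \<in> S \<and> 1 \<in> S \<and> (\<forall>x\<in>S. \<forall>y\<in>S. x + y \<in> S \<and> x * y \<in> S) \<and> (\<forall>x\<in>S. inverse x \<in> S)"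

lemma up_add: "up (x + y) = up x + up (y::'a::idom)" by (simp add: up_def)
lemma up_mult: "up (x * y) = up x * up (y::'a::idom)" by (simp add: up_def ac_simps)
lemma up_one: "up 1 = (1 :: 'a::idom poly fract)" by (simp add: up_def One_fract_def one_pCons)
lemma up_hom_comp: "up_hom e \<Longrightarrow> up_hom (e \<circ> up)"
  by (simp add: up_hom_def up_add up_mult up_one)
lemma up_hom_id: "up_hom (id :: K \<Rightarrow> K)" by (simp add: up_hom_def)

lemma hom_inverse: assumes "up_hom e" shows "e (inverse (x :: 'a :: field)) = inverse (e x)"
proof (cases "x = 0")
  case True
  have "e 0 = e 0 + e 0" using assms unfolding up_hom_def by (metis add_0)
  then have "e 0 = 0" by (metis add_cancel_right_right)
  then show ?thesis using True by simp
next
  case False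
  have "e x * e (inverse x) = 1" using assms False unfolding up_hom_def by (metis right_inverse)
  then show ?thesis by (metis inverse_unique)
qed

lemma Fract_pCons: "Fract (pCons c a) 1 = up c + var * Fract a 1"
proof -
  have "pCons c a = [:c:] + [:0,1:] * a" by (simp add: pCons_one)
  then show ?thesis by (simp add: up_def var_def)
qed

lemma gen_lemma:
  fixes e :: "'a::field poly fract \<Rightarrow> K"
  assumes h: "up_hom e" and S: "subf S" and c: "\<And>c. e (up c) \<in> S" and v: "e var \<in> S"
  shows "e x \<in> S"
proof -
  have S0: "0 \<in> S" and S1: "1 \<in> S" and Sadd: "\<And>x y. x \<in> S \<Longrightarrow> y \<in> S \<Longrightarrow> x + y \<in> S"
    and Smul: "\<And>x y. x \<in> S \<Longrightarrow> y \<in> S \<Longrightarrow> x * y \<in> S" and Sinv: "\<And>x. x \<in> S \<Longrightarrow> inverse x \<in> S"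
    using S unfolding subf_def by auto
  have eadd: "e (x + y) = e x + e y" and emul: "e (x * y) = e x * e y" for x y
    using h unfolding up_hom_def by auto
  have pol: "e (Fract a 1) \<in> S" for a :: "'a poly"
  proof (induction a)
    case 0
    have "e (Fract 0 1) = e 0" by (simp add: Zero_fract_def)
    also have "\<dots> = 0" using eadd[of 0 0] by (metis add_0 add_cancel_right_right)
    finally show ?case using S0 by simp
  next
    case (pCons c a)
    show ?case unfolding Fract_pCons eadd emul using pCons c v Sadd Smul by blast
  qed
  show ?thesis
  proof (cases x)
    case (Fract a b)
    have xe: "x = Fract a 1 * inverse (Fract b 1)" using Fract by simp
    have "e x = e (Fract a 1) * inverse (e (Fract b 1))" unfolding xe emul hom_inverse[OF h] ..
    then show ?thesis using pol Smul Sinv by simp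
  qed
qed

lemma subf_eq: assumes "field_aut f" "field_aut g" shows "subf {x. f x = g x}"
  using assms by (simp add: subf_def fa_simps)

lemma aut_unique:
  assumes f: "field_aut f" and g: "field_aut g"
    and "f X1 = g X1" "f X2 = g X2" "f X3 = g X3" "f X4 = g X4" "f X5 = g X5"
        "f X6 = g X6" "f X7 = g X7" "f X8 = g X8" "f X9 = g X9"
  shows "f = g"
proof
  fix x
  let ?S = "{x. f x = g x}"
  have S: "subf ?S" using subf_eq[OF f g] .
  have h0: "up_hom (id :: K \<Rightarrow> K)" by (rule up_hom_id)
  have h8: "up_hom (id \<circ> up :: F8 \<Rightarrow> K)" by (rule up_hom_comp[OF h0])
  have h7: "up_hom ((id \<circ> up) \<circ> up :: F7 \<Rightarrow> K)" by (rule up_hom_comp[OF h8])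
  have h6: "up_hom (((id \<circ> up) \<circ> up) \<circ> up :: F6 \<Rightarrow> K)" by (rule up_hom_comp[OF h7])
  have h5: "up_hom ((((id \<circ> up) \<circ> up) \<circ> up) \<circ> up :: F5 \<Rightarrow> K)" by (rule up_hom_comp[OF h6])
  have h4: "up_hom (((((id \<circ> up) \<circ> up) \<circ> up) \<circ> up) \<circ> up :: F4 \<Rightarrow> K)" by (rule up_hom_comp[OF h5])
  have h3: "up_hom ((((((id \<circ> up) \<circ> up) \<circ> up) \<circ> up) \<circ> up) \<circ> up :: F3 \<Rightarrow> K)" by (rule up_hom_comp[OF h4])
  have h2: "up_hom (((((((id \<circ> up) \<circ> up) \<circ> up) \<circ> up) \<circ> up) \<circ> up) \<circ> up :: F2 \<Rightarrow> K)" by (rule up_hom_comp[OF h3])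
  have h1: "up_hom ((((((((id \<circ> up) \<circ> up) \<circ> up) \<circ> up) \<circ> up) \<circ> up) \<circ> up) \<circ> up :: F1 \<Rightarrow> K)" by (rule up_hom_comp[OF h2])
  have l1: "((((((((id \<circ> up) \<circ> up) \<circ> up) \<circ> up) \<circ> up) \<circ> up) \<circ> up) \<circ> up) (y::F1) \<in> ?S" for y
    by (rule gen_lemma[OF h1 S]) (use assms in \<open>simp_all add: fa_cK cK_def[symmetric] X1_def\<close>)
  have l2: "(((((((id \<circ> up) \<circ> up) \<circ> up) \<circ> up) \<circ> up) \<circ> up) \<circ> up) (y::F2) \<in> ?S" for y
    by (rule gen_lemma[OF h2 S]) (use assms l1 in \<open>simp_all add: X2_def\<close>)
  have l3: "((((((id \<circ> up) \<circ> up) \<circ> up) \<circ> up) \<circ> up) \<circ> up) (y::F3) \<in> ?S" for y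
    by (rule gen_lemma[OF h3 S]) (use assms l2 in \<open>simp_all add: X3_def\<close>)
  have l4: "(((((id \<circ> up) \<circ> up) \<circ> up) \<circ> up) \<circ> up) (y::F4) \<in> ?S" for y
    by (rule gen_lemma[OF h4 S]) (use assms l3 in \<open>simp_all add: X4_def\<close>)
  have l5: "((((id \<circ> up) \<circ> up) \<circ> up) \<circ> up) (y::F5) \<in> ?S" for y
    by (rule gen_lemma[OF h5 S]) (use assms l4 in \<open>simp_all add: X5_def\<close>)
  have l6: "(((id \<circ> up) \<circ> up) \<circ> up) (y::F6) \<in> ?S" for y
    by (rule gen_lemma[OF h6 S]) (use assms l5 in \<open>simp_all add: X6_def\<close>)
  have l7: "((id \<circ> up) \<circ> up) (y::F7) \<in> ?S" for y
    by (rule gen_lemma[OF h7 S]) (use assms l6 in \<open>simp_all add: X7_def\<close>)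
  have l8: "(id \<circ> up) (y::F8) \<in> ?S" for y
    by (rule gen_lemma[OF h8 S]) (use assms l7 in \<open>simp_all add: X8_def\<close>)
  have l9: "id (y::K) \<in> ?S" for y
    by (rule gen_lemma[OF h0 S]) (use assms l8 in \<open>simp_all add: X9_def\<close>)
  show "f x = g x" using l9[of x] by simp
qed

lemma up_eq0: "up (x::'a::idom) = 0 \<longleftrightarrow> x = 0"
  by (simp add: up_def Zero_fract_def eq_fract)
lemma var_nz: "(var :: 'a::idom poly fract) \<noteq> 0"
  by (simp add: var_def Zero_fract_def eq_fract)
lemma X_nz: "X1 \<noteq> 0" "X2 \<noteq> 0" "X3 \<noteq> 0" "X4 \<noteq> 0" "X5 \<noteq> 0" "X6 \<noteq> 0" "X7 \<noteq> 0" "X8 \<noteq> 0" "X9 \<noteq> 0"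
  by (simp_all add: X1_def X2_def X3_def X4_def X5_def X6_def X7_def X8_def X9_def up_eq0 var_nz)
lemma cK_nz: "c \<noteq> 0 \<Longrightarrow> cK c \<noteq> 0" by (simp add: cK_def up_eq0)




locale PB =
fixes Q :: complex
    and s :: "int \<Rightarrow> K \<Rightarrow> K"
    and p w0 w1 r :: "K \<Rightarrow> K"
  assumes Q_nz: "Q \<noteq> 0"
    and Q_generic: "\<forall>k::nat. 0 < k \<longrightarrow> Q ^ k \<noteq> 1"
    and aut: "\<forall>i\<in>{0,1,2}. field_aut (s i)" "field_aut p" "field_aut w0" "field_aut w1" "field_aut r"
    and s_alpha_i: "\<forall>i\<in>{0,1,2}. s i (alpha Q i) = inverse (alpha Q i)"
    and s_alpha_j: "\<forall>i\<in>{0,1,2}. \<forall>j\<in>{0,1,2}. j \<noteq> i \<longrightarrow> s i (alpha Q j) = alpha Q j * alpha Q i"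
    and s_gam: "\<forall>i\<in>{0,1,2}. s i gam = gam"
    and s_tau_i: "\<forall>i\<in>{0,1,2}. s i (tau i) =
          (uu Q i * tau (i+1) * taub (i-1) + taub (i+1) * tau (i-1))
          / (cK Q powi (-1) * gam powi (-2) * alpha Q i ^ 3 * taub i)"
    and s_taub_i: "\<forall>i\<in>{0,1,2}. s i (taub i) =
          (vv Q i * taub (i+1) * tau (i-1) + tau (i+1) * taub (i-1))
          / (cK Q * gam ^ 2 * alpha Q i ^ 3 * tau i)"
    and s_tau_j: "\<forall>i\<in>{0,1,2}. \<forall>j\<in>{0,1,2}. j \<noteq> i \<longrightarrow> s i (tau j) = tau j \<and> s i (taub j) = taub j"
    and p_alpha: "\<forall>j\<in>{0,1,2}. p (alpha Q j) = alpha Q (j+1)"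
    and p_gam: "p gam = gam"
    and p_tau: "\<forall>i\<in>{0,1,2}. p (tau i) = tau (i+1) \<and> p (taub i) = taub (i+1)"
    and w0_alpha: "\<forall>j\<in>{0,1,2}. w0 (alpha Q j) = alpha Q j"
    and w0_gam: "w0 gam = inverse gam"
    and w0_tau: "\<forall>i\<in>{0,1,2}. w0 (tau i) = tau i"
    and w0_taub: "\<forall>i\<in>{0,1,2}. w0 (taub i) =
          alpha Q (i+1) ^ 2 * (taub i * tau (i+1) * tau (i+2) + uu Q (i-1) * tau i * taub (i+1) * tau (i+2)
             + inverse (uu Q (i+1)) * tau i * tau (i+1) * taub (i+2))
          / (alpha Q (i+2) ^ 2 * taub (i+1) * taub (i+2))"
    and w1_alpha: "\<forall>j\<in>{0,1,2}. w1 (alpha Q j) = alpha Q j"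
    and w1_gam: "w1 gam = cK Q powi (-2) * inverse gam"
    and w1_taub: "\<forall>i\<in>{0,1,2}. w1 (taub i) = taub i"
    and w1_tau: "\<forall>i\<in>{0,1,2}. w1 (tau i) =
          alpha Q (i+1) ^ 2 * (tau i * taub (i+1) * taub (i+2) + vv Q (i-1) * taub i * tau (i+1) * taub (i+2)
             + inverse (vv Q (i+1)) * taub i * taub (i+1) * tau (i+2))
          / (alpha Q (i+2) ^ 2 * tau (i+1) * tau (i+2))"
    and r_alpha: "\<forall>j\<in>{0,1,2}. r (alpha Q j) = alpha Q j"
    and r_gam: "r gam = cK Q powi (-1) * inverse gam"
    and r_tau: "\<forall>i\<in>{0,1,2}. r (tau i) = taub i \<and> r (taub i) = tau i"

begin

abbreviation "q \<equiv> cK Q"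

lemma powi_neg: "(x::K) powi (- numeral n) = inverse (x ^ numeral n)"
  by (simp add: power_int_minus)
lemma qnz: "q \<noteq> 0" using Q_nz cK_nz by simp
lemma aut_s: "field_aut (s 0)" "field_aut (s 1)" "field_aut (s 2)" using aut(1) by auto
lemmas nz = X_nz qnz
lemmas s0_t = s_tau_i[rule_format, of 0, simplified, simplified alpha_def tau_def taub_def uu_def vv_def gam_def, simplified, simplified powi_neg]
lemmas s0_b = s_taub_i[rule_format, of 0, simplified, simplified alpha_def tau_def taub_def uu_def vv_def gam_def, simplified, simplified powi_neg]
lemmas w0_b0 = w0_taub[rule_format, of 0, simplified, simplified alpha_def tau_def taub_def uu_def vv_def gam_def, simplified, simplified powi_neg]
lemmas s1_t = s_tau_i[rule_format, of 1, simplified, simplified alpha_def tau_def taub_def uu_def vv_def gam_def, simplified, simplified powi_neg]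
lemmas s1_b = s_taub_i[rule_format, of 1, simplified, simplified alpha_def tau_def taub_def uu_def vv_def gam_def, simplified, simplified powi_neg]
lemmas w0_b1 = w0_taub[rule_format, of 1, simplified, simplified alpha_def tau_def taub_def uu_def vv_def gam_def, simplified, simplified powi_neg]
lemmas s2_t = s_tau_i[rule_format, of 2, simplified, simplified alpha_def tau_def taub_def uu_def vv_def gam_def, simplified, simplified powi_neg]
lemmas s2_b = s_taub_i[rule_format, of 2, simplified, simplified alpha_def tau_def taub_def uu_def vv_def gam_def, simplified, simplified powi_neg]
lemmas w0_b2 = w0_taub[rule_format, of 2, simplified, simplified alpha_def tau_def taub_def uu_def vv_def gam_def, simplified, simplified powi_neg]
lemma s0_fix: "s 0 X5 = X5" "s 0 X8 = X8" "s 0 X6 = X6" "s 0 X9 = X9" "s 0 X3 = X3"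
  using s_tau_j s_gam by (auto simp: tau_def taub_def gam_def)
lemma s1_fix: "s 1 X4 = X4" "s 1 X7 = X7" "s 1 X6 = X6" "s 1 X9 = X9" "s 1 X3 = X3"
  using s_tau_j s_gam by (auto simp: tau_def taub_def gam_def)
lemma s2_fix: "s 2 X4 = X4" "s 2 X7 = X7" "s 2 X5 = X5" "s 2 X8 = X8" "s 2 X3 = X3"
  using s_tau_j s_gam by (auto simp: tau_def taub_def gam_def)
lemma s0_a: "s 0 X1 = inverse X1" "s 0 X2 = X2 * X1"
  using s_alpha_i s_alpha_j by (auto simp: alpha_def)
lemma s1_a: "s 1 X1 = X1 * X2" "s 1 X2 = inverse X2"
  using s_alpha_i s_alpha_j by (auto simp: alpha_def)
lemma s2_a: "s 2 X1 = X1 * (q * inverse X1 * inverse X2)" "s 2 X2 = X2 * (q * inverse X1 * inverse X2)"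
  using s_alpha_j by (auto simp: alpha_def)
lemma p_img: "p X1 = X2" "p X2 = q * inverse X1 * inverse X2" "p X3 = X3"
   "p X4 = X5" "p X5 = X6" "p X6 = X4" "p X7 = X8" "p X8 = X9" "p X9 = X7"
  using p_alpha p_gam p_tau by (auto simp: alpha_def gam_def tau_def taub_def)
lemma r_img: "r X1 = X1" "r X2 = X2" "r X3 = inverse q * inverse X3"
   "r X4 = X7" "r X5 = X8" "r X6 = X9" "r X7 = X4" "r X8 = X5" "r X9 = X6"
  using r_alpha r_gam r_tau by (auto simp: alpha_def gam_def tau_def taub_def)
lemma w0_fix: "w0 X1 = X1" "w0 X2 = X2" "w0 X3 = inverse X3" "w0 X4 = X4" "w0 X5 = X5" "w0 X6 = X6"
  using w0_alpha w0_gam w0_tau by (auto simp: alpha_def gam_def tau_def)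


lemma auts: "field_aut (s 0)" "field_aut (s 1)" "field_aut (s 2)" "field_aut p" "field_aut w0" "field_aut r"
  using aut by auto
lemmas SAFE = s0_fix s1_fix s2_fix s0_a s1_a s2_a p_img r_img w0_fix
lemmas NONSAFE = s0_t s0_b s1_t s1_b s2_t s2_b w0_b0 w0_b1 w0_b2
lemma atoms_nz: "s 0 X4 \<noteq> 0" "s 0 X7 \<noteq> 0" "s 1 X5 \<noteq> 0" "s 1 X8 \<noteq> 0" "s 2 X6 \<noteq> 0" "s 2 X9 \<noteq> 0"
   "w0 X7 \<noteq> 0" "w0 X8 \<noteq> 0" "w0 X9 \<noteq> 0"
  using fa_nz[OF auts(1)] fa_nz[OF auts(2)] fa_nz[OF auts(3)] fa_nz[OF auts(5)] X_nz by auto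

lemma nested_nz: "s 0 (s 1 X5) \<noteq> 0" "s 0 (s 1 X8) \<noteq> 0" "s 1 (s 0 X4) \<noteq> 0" "s 1 (s 0 X7) \<noteq> 0"
  using fa_nz[OF auts(1)] fa_nz[OF auts(2)] X_nz by auto

lemma s1s1: "s 1 \<circ> s 1 = id"
  apply (rule aut_unique[OF field_aut_comp[OF auts(2) auts(2)] field_aut_id])
  apply (simp_all only: comp_apply id_apply)
  apply (simp_all add: SAFE fa_simps auts nz)
  apply (subst s1_t, simp add: fa_simps auts SAFE, simp add: field_simps nz atoms_nz, simp add: NONSAFE field_simps nz, algebra)
  apply (subst s1_b, simp add: fa_simps auts SAFE, simp add: field_simps nz atoms_nz, simp add: NONSAFE field_simps nz, algebra)
  done


lemma s0s0: "s 0 \<circ> s 0 = id"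
  apply (rule aut_unique[OF field_aut_comp[OF auts(1) auts(1)] field_aut_id])
  apply (simp_all only: comp_apply id_apply)
  apply (simp_all add: SAFE fa_simps auts nz)
  apply (simp_all add: field_simps nz)?
  subgoal by (((simp only: NONSAFE)?, (simp add: fa_simps auts SAFE)?, (simp add: field_simps nz atoms_nz nested_nz)?, (simp add: NONSAFE fa_simps auts SAFE field_simps nz atoms_nz)?, (algebra)?))
  subgoal by (((simp only: NONSAFE)?, (simp add: fa_simps auts SAFE)?, (simp add: field_simps nz atoms_nz nested_nz)?, (simp add: NONSAFE fa_simps auts SAFE field_simps nz atoms_nz)?, (algebra)?))
  done

lemma s2s2: "s 2 \<circ> s 2 = id"
  apply (rule aut_unique[OF field_aut_comp[OF auts(3) auts(3)] field_aut_id])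
  apply (simp_all only: comp_apply id_apply)
  apply (simp_all add: SAFE fa_simps auts nz)
  apply (simp_all add: field_simps nz)?
  subgoal by (((simp only: NONSAFE)?, (simp add: fa_simps auts SAFE)?, (simp add: field_simps nz atoms_nz nested_nz)?, (simp add: NONSAFE fa_simps auts SAFE field_simps nz atoms_nz)?, (algebra)?))
  subgoal by (((simp only: NONSAFE)?, (simp add: fa_simps auts SAFE)?, (simp add: field_simps nz atoms_nz nested_nz)?, (simp add: NONSAFE fa_simps auts SAFE field_simps nz atoms_nz)?, (algebra)?))
  done

lemma ps2: "p \<circ> s 2 = s 0 \<circ> p"
  apply (rule aut_unique[OF field_aut_comp[OF auts(4) auts(3)] field_aut_comp[OF auts(1) auts(4)]])
  apply (simp_all only: comp_apply id_apply)
  apply (simp_all add: SAFE fa_simps auts nz)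
  apply (simp_all add: field_simps nz)?
  subgoal by (((simp only: NONSAFE)?, (simp add: fa_simps auts SAFE)?, (simp add: field_simps nz atoms_nz nested_nz)?, (simp add: NONSAFE fa_simps auts SAFE field_simps nz atoms_nz)?, (algebra)?))
  subgoal by (((simp only: NONSAFE)?, (simp add: fa_simps auts SAFE)?, (simp add: field_simps nz atoms_nz nested_nz)?, (simp add: NONSAFE fa_simps auts SAFE field_simps nz atoms_nz)?, (algebra)?))
  done

lemma ps0: "p \<circ> s 0 = s 1 \<circ> p"
  apply (rule aut_unique[OF field_aut_comp[OF auts(4) auts(1)] field_aut_comp[OF auts(2) auts(4)]])
  apply (simp_all only: comp_apply id_apply)
  apply (simp_all add: SAFE fa_simps auts nz)
  apply (simp_all add: field_simps nz)?
  subgoal by (((simp only: NONSAFE)?, (simp add: fa_simps auts SAFE)?, (simp add: field_simps nz atoms_nz nested_nz)?, (simp add: NONSAFE fa_simps auts SAFE field_simps nz atoms_nz)?, (algebra)?))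
  subgoal by (((simp only: NONSAFE)?, (simp add: fa_simps auts SAFE)?, (simp add: field_simps nz atoms_nz nested_nz)?, (simp add: NONSAFE fa_simps auts SAFE field_simps nz atoms_nz)?, (algebra)?))
  done

lemma ps1: "p \<circ> s 1 = s 2 \<circ> p"
  apply (rule aut_unique[OF field_aut_comp[OF auts(4) auts(2)] field_aut_comp[OF auts(3) auts(4)]])
  apply (simp_all only: comp_apply id_apply)
  apply (simp_all add: SAFE fa_simps auts nz)
  apply (simp_all add: field_simps nz)?
  subgoal by (((simp only: NONSAFE)?, (simp add: fa_simps auts SAFE)?, (simp add: field_simps nz atoms_nz nested_nz)?, (simp add: NONSAFE fa_simps auts SAFE field_simps nz atoms_nz)?, (algebra)?))
  subgoal by (((simp only: NONSAFE)?, (simp add: fa_simps auts SAFE)?, (simp add: field_simps nz atoms_nz nested_nz)?, (simp add: NONSAFE fa_simps auts SAFE field_simps nz atoms_nz)?, (algebra)?))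
  done

lemma rs1: "r \<circ> s 1 = s 1 \<circ> r"
  apply (rule aut_unique[OF field_aut_comp[OF auts(6) auts(2)] field_aut_comp[OF auts(2) auts(6)]])
  apply (simp_all only: comp_apply id_apply)
  apply (simp_all add: SAFE fa_simps auts nz)
  apply (simp_all add: field_simps nz)?
  subgoal by (((simp only: NONSAFE)?, (simp add: fa_simps auts SAFE)?, (simp add: field_simps nz atoms_nz nested_nz)?, (simp add: NONSAFE fa_simps auts SAFE field_simps nz atoms_nz)?, (algebra)?))
  subgoal by (((simp only: NONSAFE)?, (simp add: fa_simps auts SAFE)?, (simp add: field_simps nz atoms_nz nested_nz)?, (simp add: NONSAFE fa_simps auts SAFE field_simps nz atoms_nz)?, (algebra)?))
  done

lemma rs2: "r \<circ> s 2 = s 2 \<circ> r"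
  apply (rule aut_unique[OF field_aut_comp[OF auts(6) auts(3)] field_aut_comp[OF auts(3) auts(6)]])
  apply (simp_all only: comp_apply id_apply)
  apply (simp_all add: SAFE fa_simps auts nz)
  apply (simp_all add: field_simps nz)?
  subgoal by (((simp only: NONSAFE)?, (simp add: fa_simps auts SAFE)?, (simp add: field_simps nz atoms_nz nested_nz)?, (simp add: NONSAFE fa_simps auts SAFE field_simps nz atoms_nz)?, (algebra)?))
  subgoal by (((simp only: NONSAFE)?, (simp add: fa_simps auts SAFE)?, (simp add: field_simps nz atoms_nz nested_nz)?, (simp add: NONSAFE fa_simps auts SAFE field_simps nz atoms_nz)?, (algebra)?))
  done

lemma rp: "r \<circ> p = p \<circ> r"
  apply (rule aut_unique[OF field_aut_comp[OF auts(6) auts(4)] field_aut_comp[OF auts(4) auts(6)]])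
  apply (simp_all only: comp_apply id_apply)
  apply (simp_all add: SAFE fa_simps auts nz)
  apply (simp_all add: field_simps nz)?
  done

lemma w0s1: "w0 \<circ> s 1 = s 1 \<circ> w0"
  apply (rule aut_unique[OF field_aut_comp[OF auts(5) auts(2)] field_aut_comp[OF auts(2) auts(5)]])
  apply (simp_all only: comp_apply id_apply)
  apply (simp_all add: SAFE fa_simps auts nz)
  apply (simp_all add: field_simps nz)?
  subgoal by (((simp only: NONSAFE)?, (simp add: fa_simps auts SAFE)?, (simp add: field_simps nz atoms_nz nested_nz)?, (simp add: NONSAFE fa_simps auts SAFE field_simps nz atoms_nz)?, (algebra)?))
  subgoal by (((simp only: NONSAFE)?, (simp add: fa_simps auts SAFE)?, (simp add: field_simps nz atoms_nz nested_nz)?, (simp add: NONSAFE fa_simps auts SAFE field_simps nz atoms_nz)?, (algebra)?))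
  subgoal by (((simp only: NONSAFE)?, (simp add: fa_simps auts SAFE)?, (simp add: field_simps nz atoms_nz nested_nz)?, (simp add: NONSAFE fa_simps auts SAFE field_simps nz atoms_nz)?, (algebra)?))
  subgoal by (((simp only: NONSAFE)?, (simp add: fa_simps auts SAFE)?, (simp add: field_simps nz atoms_nz nested_nz)?, (simp add: NONSAFE fa_simps auts SAFE field_simps nz atoms_nz)?, (algebra)?))
  done

lemma w0s2: "w0 \<circ> s 2 = s 2 \<circ> w0"
  apply (rule aut_unique[OF field_aut_comp[OF auts(5) auts(3)] field_aut_comp[OF auts(3) auts(5)]])
  apply (simp_all only: comp_apply id_apply)
  apply (simp_all add: SAFE fa_simps auts nz)
  apply (simp_all add: field_simps nz)?
  subgoal by (((simp only: NONSAFE)?, (simp add: fa_simps auts SAFE)?, (simp add: field_simps nz atoms_nz nested_nz)?, (simp add: NONSAFE fa_simps auts SAFE field_simps nz atoms_nz)?, (algebra)?))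
  subgoal by (((simp only: NONSAFE)?, (simp add: fa_simps auts SAFE)?, (simp add: field_simps nz atoms_nz nested_nz)?, (simp add: NONSAFE fa_simps auts SAFE field_simps nz atoms_nz)?, (algebra)?))
  subgoal by (((simp only: NONSAFE)?, (simp add: fa_simps auts SAFE)?, (simp add: field_simps nz atoms_nz nested_nz)?, (simp add: NONSAFE fa_simps auts SAFE field_simps nz atoms_nz)?, (algebra)?))
  subgoal by (((simp only: NONSAFE)?, (simp add: fa_simps auts SAFE)?, (simp add: field_simps nz atoms_nz nested_nz)?, (simp add: NONSAFE fa_simps auts SAFE field_simps nz atoms_nz)?, (algebra)?))
  done

lemma w0p: "w0 \<circ> p = p \<circ> w0"
  apply (rule aut_unique[OF field_aut_comp[OF auts(5) auts(4)] field_aut_comp[OF auts(4) auts(5)]])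
  apply (simp_all only: comp_apply id_apply)
  apply (simp_all add: SAFE fa_simps auts nz)
  apply (simp_all add: field_simps nz)?
  subgoal by (((simp only: NONSAFE)?, (simp add: fa_simps auts SAFE)?, (simp add: field_simps nz atoms_nz nested_nz)?, (simp add: NONSAFE fa_simps auts SAFE field_simps nz atoms_nz)?, (algebra)?))
  subgoal by (((simp only: NONSAFE)?, (simp add: fa_simps auts SAFE)?, (simp add: field_simps nz atoms_nz nested_nz)?, (simp add: NONSAFE fa_simps auts SAFE field_simps nz atoms_nz)?, (algebra)?))
  subgoal by (((simp only: NONSAFE)?, (simp add: fa_simps auts SAFE)?, (simp add: field_simps nz atoms_nz nested_nz)?, (simp add: NONSAFE fa_simps auts SAFE field_simps nz atoms_nz)?, (algebra)?))
  done

lemma rs0: "r \<circ> s 0 = s 0 \<circ> r"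
  apply (rule aut_unique[OF field_aut_comp[OF auts(6) auts(1)] field_aut_comp[OF auts(1) auts(6)]])
  apply (simp_all only: comp_apply id_apply)
  apply (simp_all add: SAFE fa_simps auts nz)
  apply (simp_all add: field_simps nz)?
  subgoal by (((simp only: NONSAFE)?, (simp add: fa_simps auts SAFE)?, (simp add: field_simps nz atoms_nz nested_nz)?, (simp add: NONSAFE fa_simps auts SAFE field_simps nz atoms_nz)?, (algebra)?))
  subgoal by (((simp only: NONSAFE)?, (simp add: fa_simps auts SAFE)?, (simp add: field_simps nz atoms_nz nested_nz)?, (simp add: NONSAFE fa_simps auts SAFE field_simps nz atoms_nz)?, (algebra)?))
  done

lemma w0s0: "w0 \<circ> s 0 = s 0 \<circ> w0"
  apply (rule aut_unique[OF field_aut_comp[OF auts(5) auts(1)] field_aut_comp[OF auts(1) auts(5)]])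
  apply (simp_all only: comp_apply id_apply)
  apply (simp_all add: SAFE fa_simps auts nz)
  apply (simp_all add: field_simps nz)?
  subgoal by (((simp only: NONSAFE)?, (simp add: fa_simps auts SAFE)?, (simp add: field_simps nz atoms_nz nested_nz)?, (simp add: NONSAFE fa_simps auts SAFE field_simps nz atoms_nz)?, (algebra)?))
  subgoal by (((simp only: NONSAFE)?, (simp add: fa_simps auts SAFE)?, (simp add: field_simps nz atoms_nz nested_nz)?, (simp add: NONSAFE fa_simps auts SAFE field_simps nz atoms_nz)?, (algebra)?))
  subgoal by (((simp only: NONSAFE)?, (simp add: fa_simps auts SAFE)?, (simp add: field_simps nz atoms_nz nested_nz)?, (simp add: NONSAFE fa_simps auts SAFE field_simps nz atoms_nz)?, (algebra)?))
  subgoal by (((simp only: NONSAFE)?, (simp add: fa_simps auts SAFE)?, (simp add: field_simps nz atoms_nz nested_nz)?, (simp add: NONSAFE fa_simps auts SAFE field_simps nz atoms_nz)?, (algebra)?))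
  done

lemma braid: "s 0 \<circ> s 1 \<circ> s 0 = s 1 \<circ> s 0 \<circ> s 1"
  apply (rule aut_unique[OF field_aut_comp[OF field_aut_comp[OF auts(1) auts(2)] auts(1)] field_aut_comp[OF field_aut_comp[OF auts(2) auts(1)] auts(2)]])
  apply (simp_all only: comp_apply id_apply)
  apply (simp_all add: SAFE fa_simps auts nz)
  apply (simp_all add: field_simps nz)?
  subgoal by (((simp only: NONSAFE)?, (simp add: fa_simps auts SAFE)?, (simp add: field_simps nz atoms_nz nested_nz)?, (simp add: NONSAFE fa_simps auts SAFE field_simps nz atoms_nz)?, (algebra)?))
  subgoal by (((simp only: NONSAFE)?, (simp add: fa_simps auts SAFE)?, (simp add: field_simps nz atoms_nz nested_nz)?, (simp add: NONSAFE fa_simps auts SAFE field_simps nz atoms_nz)?, (algebra)?))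
  subgoal by (((simp only: NONSAFE)?, (simp add: fa_simps auts SAFE)?, (simp add: field_simps nz atoms_nz nested_nz)?, (simp add: NONSAFE fa_simps auts SAFE field_simps nz atoms_nz)?, (algebra)?))
  subgoal by (((simp only: NONSAFE)?, (simp add: fa_simps auts SAFE)?, (simp add: field_simps nz atoms_nz nested_nz)?, (simp add: NONSAFE fa_simps auts SAFE field_simps nz atoms_nz)?, (algebra)?))
  done



end



lemma zpow0: "zpow f 0 = id" by (simp add: zpow_def)
lemma zpow_succ: assumes "bij f" shows "zpow f (n+1) = f \<circ> zpow f n"
proof (cases "n \<ge> 0")
  case True
  then have "nat (n+1) = Suc (nat n)" by simp
  then show ?thesis using True by (simp add: zpow_def)
next
  case False
  then have e: "nat (-n) = Suc (nat (-(n+1)))" by simp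
  have fi: "f \<circ> inv f = id" using assms bij_is_surj surj_iff by blast
  have ff: "f \<circ> (inv f \<circ> g) = g" for g using fi by (simp add: comp_assoc[symmetric])
  show ?thesis using False e fi by (simp add: zpow_def funpow_Suc_right[symmetric] ff)
qed
lemma zpow_pred: assumes "bij f" shows "zpow f (n-1) = inv f \<circ> zpow f n"
proof -
  have if': "inv f \<circ> f = id" using assms bij_is_inj inj_iff by blast
  have "zpow f n = zpow f ((n-1)+1)" by simp
  also have "\<dots> = f \<circ> zpow f (n-1)" by (rule zpow_succ[OF assms])
  finally have "inv f \<circ> zpow f n = (inv f \<circ> f) \<circ> zpow f (n-1)" by (simp add: comp_assoc)
  then show ?thesis using if' by simp
qed
lemma zpow_add: assumes "bij f" shows "zpow f (a + b) = zpow f a \<circ> zpow f b"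
proof (induction a rule: int_induct[where k=0])
  case base then show ?case by (simp add: zpow0)
next
  case (step1 i)
  have "zpow f (i + 1 + b) = zpow f ((i + b) + 1)" by (rule arg_cong[where f="zpow f"]) simp
  also have "\<dots> = f \<circ> zpow f (i+b)" by (rule zpow_succ[OF assms])
  finally show ?case using step1 zpow_succ[OF assms, of i] by (simp add: comp_assoc)
next
  case (step2 i)
  have "zpow f (i - 1 + b) = zpow f ((i + b) - 1)" by (rule arg_cong[where f="zpow f"]) simp
  also have "\<dots> = inv f \<circ> zpow f (i+b)" by (rule zpow_pred[OF assms])
  finally show ?case using step2 zpow_pred[OF assms, of i] by (simp add: comp_assoc)
qed
lemma comm_inv: assumes "bij g" "h \<circ> g = g \<circ> h" shows "h \<circ> inv g = inv g \<circ> h"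
proof -
  have fi: "g \<circ> inv g = id" using assms bij_is_surj surj_iff by blast
  have if': "inv g \<circ> g = id" using assms bij_is_inj inj_iff by blast
  have "h \<circ> inv g = inv g \<circ> g \<circ> h \<circ> inv g" using if' by simp
  also have "\<dots> = inv g \<circ> h \<circ> g \<circ> inv g" using assms(2) by (simp add: comp_assoc)
  also have "\<dots> = inv g \<circ> h" using fi by (simp add: comp_assoc)
  finally show ?thesis .
qed
lemma comm_step: assumes "h \<circ> Z = Z \<circ> h" "h \<circ> g = g \<circ> h" shows "h \<circ> (g \<circ> Z) = (g \<circ> Z) \<circ> h"
proof -
  have "h \<circ> (g \<circ> Z) = (h \<circ> g) \<circ> Z" by (simp add: comp_assoc)
  also have "\<dots> = g \<circ> (h \<circ> Z)" using assms(2) by (simp add: comp_assoc)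
  also have "\<dots> = (g \<circ> Z) \<circ> h" using assms(1) by (simp add: comp_assoc)
  finally show ?thesis .
qed
lemma comm_zpow: assumes "bij g" "h \<circ> g = g \<circ> h" shows "h \<circ> zpow g b = zpow g b \<circ> h"
proof (induction b rule: int_induct[where k=0])
  case base then show ?case by (simp add: zpow0)
next
  case (step1 i) show ?case unfolding zpow_succ[OF assms(1), of i] by (rule comm_step[OF step1(2) assms(2)])
next
  case (step2 i) show ?case unfolding zpow_pred[OF assms(1), of i] by (rule comm_step[OF step2(2) comm_inv[OF assms]])
qed
lemma zpow_comm: assumes "bij f" "bij g" "f \<circ> g = g \<circ> f"
  shows "zpow f a \<circ> zpow g b = zpow g b \<circ> zpow f a"
proof -
  have c1: "f \<circ> zpow g b = zpow g b \<circ> f" by (rule comm_zpow[OF assms(2,3)])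
  have c2: "inv f \<circ> zpow g b = zpow g b \<circ> inv f"
    using comm_inv[OF assms(1), of "zpow g b"] c1 by simp
  have c1': "zpow g b \<circ> f = f \<circ> zpow g b" using c1 by simp
  have c2': "zpow g b \<circ> inv f = inv f \<circ> zpow g b" using c2 by simp
  show ?thesis
  proof (induction a rule: int_induct[where k=0])
    case base then show ?case by (simp add: zpow0)
  next
    case (step1 i) show ?case unfolding zpow_succ[OF assms(1), of i]
      using comm_step[OF step1(2)[symmetric] c1'] by (rule sym)
  next
    case (step2 i) show ?case unfolding zpow_pred[OF assms(1), of i]
      using comm_step[OF step2(2)[symmetric] c2'] by (rule sym)
  qed
qed
lemma zpow_scale: assumes f: "field_aut f" and fx: "f x = c * x" and fc: "f c = c" and c: "c \<noteq> 0"
  shows "zpow f n x = c powi n * x"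
proof (induction n rule: int_induct[where k=0])
  case base then show ?case by (simp add: zpow0)
next
  case (step1 i)
  have "zpow f (i+1) x = f (c powi i * x)" using zpow_succ[OF fa_bij[OF f], of i] step1 by simp
  also have "\<dots> = c powi (i+1) * x" using fx fc c by (simp add: fa_simps[OF f] power_int_add)
  finally show ?case .
next
  case (step2 i)
  have b: "bij f" using fa_bij[OF f] .
  have "f (c powi (i-1) * x) = c powi i * x" using fx fc c by (simp add: fa_simps[OF f] power_int_diff)
  then have "inv f (c powi i * x) = c powi (i-1) * x" using b by (metis bij_inv_eq_iff)
  then show ?case using zpow_pred[OF b, of i] step2 by simp
qed

context PB begin
definition "T1 = p \<circ> s 2 \<circ> s 1"
definition "T2 = s 1 \<circ> p \<circ> s 2"
definition "T4 = r \<circ> w0"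

lemma r2: "\<And>f. s 2 \<circ> (s 2 \<circ> f) = f" "\<And>f. r \<circ> (s 0 \<circ> f) = s 0 \<circ> (r \<circ> f)" "\<And>f. w0 \<circ> (s 0 \<circ> f) = s 0 \<circ> (w0 \<circ> f)" "\<And>f. s 1 \<circ> (s 1 \<circ> f) = f" "\<And>f. s 0 \<circ> (s 0 \<circ> f) = f"
  "\<And>f. p \<circ> (s 2 \<circ> f) = s 0 \<circ> (p \<circ> f)" "\<And>f. p \<circ> (s 0 \<circ> f) = s 1 \<circ> (p \<circ> f)"
  "\<And>f. p \<circ> (s 1 \<circ> f) = s 2 \<circ> (p \<circ> f)"
  "\<And>f. s 1 \<circ> (s 0 \<circ> (s 1 \<circ> f)) = s 0 \<circ> (s 1 \<circ> (s 0 \<circ> f))"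
  "\<And>f. r \<circ> (s 1 \<circ> f) = s 1 \<circ> (r \<circ> f)" "\<And>f. r \<circ> (s 2 \<circ> f) = s 2 \<circ> (r \<circ> f)"
  "\<And>f. r \<circ> (p \<circ> f) = p \<circ> (r \<circ> f)"
  "\<And>f. w0 \<circ> (s 1 \<circ> f) = s 1 \<circ> (w0 \<circ> f)" "\<And>f. w0 \<circ> (s 2 \<circ> f) = s 2 \<circ> (w0 \<circ> f)"
  "\<And>f. w0 \<circ> (p \<circ> f) = p \<circ> (w0 \<circ> f)"
  by (simp_all only: comp_assoc[symmetric] s2s2 rs0 w0s0 s1s1 s0s0 id_comp ps2 ps0 ps1 braid[symmetric] rs1 rs2 rp w0s1 w0s2 w0p)

lemma r2': "s 2 \<circ> s 2 = id" "r \<circ> s 0 = s 0 \<circ> r" "w0 \<circ> s 0 = s 0 \<circ> w0" "s 1 \<circ> s 1 = id" "s 0 \<circ> s 0 = id"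
  "p \<circ> s 2 = s 0 \<circ> p" "p \<circ> s 0 = s 1 \<circ> p" "p \<circ> s 1 = s 2 \<circ> p"
  "r \<circ> s 1 = s 1 \<circ> r" "r \<circ> s 2 = s 2 \<circ> r" "r \<circ> p = p \<circ> r"
  "w0 \<circ> s 1 = s 1 \<circ> w0" "w0 \<circ> s 2 = s 2 \<circ> w0" "w0 \<circ> p = p \<circ> w0"
  using s2s2 rs0 w0s0 s1s1 s0s0 ps2 ps0 ps1 rs1 rs2 rp w0s1 w0s2 w0p by auto

lemma T12: "T1 \<circ> T2 = T2 \<circ> T1"
  unfolding T1_def T2_def by (simp add: comp_assoc r2 r2')
lemma T14: "T1 \<circ> T4 = T4 \<circ> T1"
  unfolding T1_def T4_def by (simp add: comp_assoc r2 r2')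
lemma T24: "T2 \<circ> T4 = T4 \<circ> T2"
  unfolding T2_def T4_def by (simp add: comp_assoc r2 r2')


lemma autT: "field_aut T1" "field_aut T2" "field_aut T4"
  unfolding T1_def T2_def T4_def using auts by (auto intro!: field_aut_comp)
lemma T_a: "T1 X1 = q * X1" "T1 X2 = inverse q * X2" "T2 X1 = X1" "T2 X2 = q * X2"
   "T4 X1 = X1" "T4 X2 = X2"
  unfolding T1_def T2_def T4_def using nz by (simp_all add: fa_simps auts SAFE field_simps)

lemma zpow1: "zpow f 1 = f" by (simp add: zpow_def)
lemma zpowm1: "zpow f (-1) = inv f" by (simp add: zpow_def)
lemma fc: "\<And>x. s 2 (s 2 x) = x" "\<And>x. s 1 (s 1 x) = x" "\<And>x. p (s 2 x) = s 0 (p x)" "\<And>x. p (s 0 x) = s 1 (p x)"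
  using fun_cong[OF s2s2] fun_cong[OF s1s1] fun_cong[OF ps2] fun_cong[OF ps0] by auto
lemma injT: "inj T1" "inj T2" using autT fa_inj by auto

lemma tv00: "tauNM T1 T2 T4 0 0 0 = X5" by (simp add: tauNM_def zpow0 tau_def)
lemma tv10: "tauNM T1 T2 T4 1 0 0 = p (s 2 (s 1 X5))" by (simp add: tauNM_def zpow0 zpow1 tau_def T1_def)
lemma tv01: "tauNM T1 T2 T4 0 1 0 = X6" by (simp add: tauNM_def zpow0 zpow1 tau_def T2_def SAFE)
lemma tv11: "tauNM T1 T2 T4 1 1 0 = p (s 2 X6)" by (simp add: tauNM_def zpow0 zpow1 tau_def T1_def T2_def SAFE)
lemma tvm0: "tauNM T1 T2 T4 (-1) 0 0 = X4"
proof -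
  have "T1 X4 = X5" by (simp add: T1_def SAFE)
  then show ?thesis by (simp add: tauNM_def zpow0 zpowm1 tau_def inv_f_eq[OF injT(1)])
qed
lemma tv0m: "tauNM T1 T2 T4 0 (-1) 0 = s 2 (p (s 2 X6))"
proof -
  have "T2 (s 2 (p (s 2 X6))) = X5" by (simp add: T2_def fc SAFE)
  then show ?thesis by (simp add: tauNM_def zpow0 zpowm1 tau_def inv_f_eq[OF injT(2)])
qed
lemma tvmm: "tauNM T1 T2 T4 (-1) (-1) 0 = s 2 X6"
proof -
  have "T2 (s 2 X6) = X4" by (simp add: T2_def fc SAFE)
  then have "T1 (T2 (s 2 X6)) = X5" by (simp add: T1_def SAFE)
  then have "T2 (T1 (s 2 X6)) = X5" using fun_cong[OF T12, of "s 2 X6"] by simp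
  then have "inv T2 X5 = T1 (s 2 X6)" by (simp add: inv_f_eq[OF injT(2)])
  then show ?thesis by (simp add: tauNM_def zpow0 zpowm1 tau_def inv_f_eq[OF injT(1)])
qed

lemma B1: "(q^4 * inverse (X2^4) * (q * inverse X1 * inverse X2)^4 - X1^4 * inverse ((q * inverse X1 * inverse X2)^4)) * X5^2
   + X1 * inverse (q * inverse X1 * inverse X2) * p (s 2 X6) * s 2 X6
   - q * inverse X2 * (q * inverse X1 * inverse X2) * X6 * s 2 (p (s 2 X6)) = 0"
  apply (simp add: NONSAFE fa_simps auts SAFE)
  apply (simp add: field_simps nz)
  apply algebra?
  done
lemma B2: "(X1^4 * inverse ((q * inverse X1 * inverse X2)^4) - inverse (q^4) * inverse (X1^4) * X2^4) * X5^2
   + inverse q * inverse X1 * X2 * p (s 2 (s 1 X5)) * X4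
   - X1 * inverse (q * inverse X1 * inverse X2) * p (s 2 X6) * s 2 X6 = 0"
  apply (simp add: NONSAFE fa_simps auts SAFE)
  apply (simp add: field_simps nz)
  apply algebra?
  done

end


context PB begin
lemma pw: "(x::K) \<noteq> 0 \<Longrightarrow> x powi (i*n + j*m + k) = (x powi n) powi i * (x powi m) powi j * x powi k"
proof -
  assume x: "x \<noteq> 0"
  have a: "x powi (i*n) = (x powi n) powi i" "x powi (j*m) = (x powi m) powi j"
    by (metis mult.commute power_int_mult)+
  show ?thesis using x by (simp add: power_int_add a)
qed

lemma mainthm: "\<forall>n m N :: int.
     let T1 = p \<circ> s 2 \<circ> s 1; T2 = s 1 \<circ> p \<circ> s 2; T4 = r \<circ> w0;
         t = tauNM T1 T2 T4; q = cK Q; a0 = alpha Q 0; a1 = alpha Q 1; a2 = alpha Q 2 in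
     (q powi (4*n-8*m+4) * a1 powi (-4) * a2 ^ 4 - q powi (4*n+4*m) * a0 ^ 4 * a2 powi (-4))
        * (t n m N) ^ 2
       + q powi (n+m) * a0 * inverse a2 * t (n+1) (m+1) N * t (n-1) (m-1) N
       - q powi (n-2*m+1) * inverse a1 * a2 * t n (m+1) N * t n (m-1) N = 0
   \<and> (q powi (4*n+4*m) * a0 ^ 4 * a2 powi (-4) - q powi (-8*n+4*m-4) * a0 powi (-4) * a1 ^ 4)
        * (t n m N) ^ 2
       + q powi (-2*n+m-1) * inverse a0 * a1 * t (n+1) m N * t (n-1) m N
       - q powi (n+m) * a0 * inverse a2 * t (n+1) (m+1) N * t (n-1) (m-1) N = 0
   \<and> (q powi (-8*n+4*m-4) * a0 powi (-4) * a1 ^ 4 - q powi (4*n-8*m+4) * a1 powi (-4) * a2 ^ 4)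
        * (t n m N) ^ 2
       - q powi (-2*n+m-1) * inverse a0 * a1 * t (n+1) m N * t (n-1) m N
       + q powi (n-2*m+1) * inverse a1 * a2 * t n (m+1) N * t n (m-1) N = 0"
proof (intro allI)
  fix n m N :: int
  define Y where "Y = zpow T1 n \<circ> zpow T2 m \<circ> zpow T4 N"
  have aY: "field_aut Y" unfolding Y_def using autT by (simp add: field_aut_comp field_aut_zpow)
  have bT: "bij T1" "bij T2" "bij T4" using autT fa_bij by auto
  have c12: "\<And>a b x. zpow T1 a (zpow T2 b x) = zpow T2 b (zpow T1 a x)"
    using zpow_comm[OF bT(1) bT(2) T12] by (metis comp_apply)
  have c14: "\<And>a b x. zpow T1 a (zpow T4 b x) = zpow T4 b (zpow T1 a x)"
    using zpow_comm[OF bT(1) bT(3) T14] by (metis comp_apply)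
  have c24: "\<And>a b x. zpow T2 a (zpow T4 b x) = zpow T4 b (zpow T2 a x)"
    using zpow_comm[OF bT(2) bT(3) T24] by (metis comp_apply)
  have tsh: "tauNM T1 T2 T4 (n+a) (m+b) N = Y (tauNM T1 T2 T4 a b 0)" for a b
  proof -
    have "tauNM T1 T2 T4 (n+a) (m+b) N = zpow T1 n (zpow T1 a (zpow T2 m (zpow T2 b (zpow T4 N X5))))"
      by (simp add: tauNM_def tau_def zpow_add[OF bT(1)] zpow_add[OF bT(2)])
    also have "\<dots> = zpow T1 n (zpow T2 m (zpow T1 a (zpow T2 b (zpow T4 N X5))))" by (simp only: c12)
    also have "\<dots> = zpow T1 n (zpow T2 m (zpow T1 a (zpow T4 N (zpow T2 b X5))))" by (simp only: c24)
    also have "\<dots> = zpow T1 n (zpow T2 m (zpow T4 N (zpow T1 a (zpow T2 b X5))))" by (simp only: c14)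
    also have "\<dots> = Y (tauNM T1 T2 T4 a b 0)" by (simp add: Y_def tauNM_def tau_def zpow0)
    finally show ?thesis .
  qed
  have tY: "Y (tauNM T1 T2 T4 0 0 0) = tauNM T1 T2 T4 n m N"
     "Y (tauNM T1 T2 T4 1 1 0) = tauNM T1 T2 T4 (n+1) (m+1) N"
     "Y (tauNM T1 T2 T4 (-1) (-1) 0) = tauNM T1 T2 T4 (n-1) (m-1) N"
     "Y (tauNM T1 T2 T4 0 1 0) = tauNM T1 T2 T4 n (m+1) N"
     "Y (tauNM T1 T2 T4 0 (-1) 0) = tauNM T1 T2 T4 n (m-1) N"
     "Y (tauNM T1 T2 T4 1 0 0) = tauNM T1 T2 T4 (n+1) m N"
     "Y (tauNM T1 T2 T4 (-1) 0 0) = tauNM T1 T2 T4 (n-1) m N"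
    using tsh[of 0 0] tsh[of 1 1] tsh[of "-1" "-1"] tsh[of 0 1] tsh[of 0 "-1"] tsh[of 1 0] tsh[of "-1" 0]
    by simp_all
  define A where "A = q powi n"
  define B where "B = q powi m"
  have Anz: "A \<noteq> 0" and Bnz: "B \<noteq> 0" unfolding A_def B_def using qnz by (simp_all add: power_int_not_zero)
  have iq: "inverse q \<noteq> 0" using qnz by simp
  have Y1: "Y X1 = A * X1"
  proof -
    have "zpow T4 N X1 = X1" using zpow_scale[OF autT(3), of X1 1 N] T_a fa_one[OF autT(3)] by simp
    moreover have "zpow T2 m X1 = X1" using zpow_scale[OF autT(2), of X1 1 m] T_a fa_one[OF autT(2)] by simp
    moreover have "zpow T1 n X1 = A * X1" unfolding A_def using zpow_scale[OF autT(1), of X1 q n] T_a fa_cK[OF autT(1)] qnz by simp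
    ultimately show ?thesis by (simp add: Y_def)
  qed
  have Y2: "Y X2 = B * inverse A * X2"
  proof -
    have "zpow T4 N X2 = X2" using zpow_scale[OF autT(3), of X2 1 N] T_a fa_one[OF autT(3)] by simp
    moreover have "zpow T2 m X2 = B * X2" unfolding B_def using zpow_scale[OF autT(2), of X2 q m] T_a fa_cK[OF autT(2)] qnz by simp
    moreover have "zpow T1 n X2 = inverse A * X2" unfolding A_def
      using zpow_scale[OF autT(1), of X2 "inverse q" n] T_a fa_cK[OF autT(1)] fa_inverse[OF autT(1)] qnz
      by (simp add: power_int_inverse)
    ultimately show ?thesis using fa_mult[OF field_aut_zpow[OF autT(1)]] fa_powi[OF field_aut_zpow[OF autT(1)]]
       fa_cK[OF field_aut_zpow[OF autT(1)]] unfolding Y_def B_def by simp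
  qed
  have Yq: "Y q = q" using fa_cK[OF aY] .
  have B1': "(q^4 * inverse (X2^4) * (q * inverse X1 * inverse X2)^4 - X1^4 * inverse ((q * inverse X1 * inverse X2)^4)) * (tauNM T1 T2 T4 0 0 0)^2
   + X1 * inverse (q * inverse X1 * inverse X2) * tauNM T1 T2 T4 1 1 0 * tauNM T1 T2 T4 (-1) (-1) 0
   - q * inverse X2 * (q * inverse X1 * inverse X2) * tauNM T1 T2 T4 0 1 0 * tauNM T1 T2 T4 0 (-1) 0 = 0" (is "?L1 = 0")
    unfolding tv00 tv11 tvmm tv01 tv0m by (rule B1)
  have B2': "(X1^4 * inverse ((q * inverse X1 * inverse X2)^4) - inverse (q^4) * inverse (X1^4) * X2^4) * (tauNM T1 T2 T4 0 0 0)^2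
   + inverse q * inverse X1 * X2 * tauNM T1 T2 T4 1 0 0 * tauNM T1 T2 T4 (-1) 0 0
   - X1 * inverse (q * inverse X1 * inverse X2) * tauNM T1 T2 T4 1 1 0 * tauNM T1 T2 T4 (-1) (-1) 0 = 0" (is "?L2 = 0")
    unfolding tv00 tv11 tvmm tv10 tvm0 by (rule B2)
  have YL1: "Y ?L1 = 0" using B1' fa_zero[OF aY] by simp
  have YL2: "Y ?L2 = 0" using B2' fa_zero[OF aY] by simp
  have YL3: "- Y ?L1 - Y ?L2 = 0" using YL1 YL2 by simp
  have e1: "q powi (4*n-8*m+4) = A^4 * B powi (-8) * q^4"
    using pw[OF qnz, of 4 n "-8" m 4] unfolding A_def B_def by (simp add: algebra_simps)
  have e2: "q powi (4*n+4*m) = A^4 * B^4"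
    using pw[OF qnz, of 4 n 4 m 0] unfolding A_def B_def by (simp add: algebra_simps)
  have e3: "q powi (n+m) = A * B"
    using pw[OF qnz, of 1 n 1 m 0] unfolding A_def B_def by (simp add: algebra_simps)
  have e4: "q powi (n-2*m+1) = A * B powi (-2) * q"
    using pw[OF qnz, of 1 n "-2" m 1] unfolding A_def B_def by (simp add: algebra_simps)
  have e5: "q powi (-8*n+4*m-4) = A powi (-8) * B^4 * q powi (-4)"
    using pw[OF qnz, of "-8" n 4 m "-4"] unfolding A_def B_def by (simp add: algebra_simps)
  have e6: "q powi (-2*n+m-1) = A powi (-2) * B * q powi (-1)"
    using pw[OF qnz, of "-2" n 1 m "-1"] unfolding A_def B_def by (simp add: algebra_simps)
  show "let T1 = p \<circ> s 2 \<circ> s 1; T2 = s 1 \<circ> p \<circ> s 2; T4 = r \<circ> w0;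
         t = tauNM T1 T2 T4; q = cK Q; a0 = alpha Q 0; a1 = alpha Q 1; a2 = alpha Q 2 in
     (q powi (4*n-8*m+4) * a1 powi (-4) * a2 ^ 4 - q powi (4*n+4*m) * a0 ^ 4 * a2 powi (-4))
        * (t n m N) ^ 2
       + q powi (n+m) * a0 * inverse a2 * t (n+1) (m+1) N * t (n-1) (m-1) N
       - q powi (n-2*m+1) * inverse a1 * a2 * t n (m+1) N * t n (m-1) N = 0
   \<and> (q powi (4*n+4*m) * a0 ^ 4 * a2 powi (-4) - q powi (-8*n+4*m-4) * a0 powi (-4) * a1 ^ 4)
        * (t n m N) ^ 2
       + q powi (-2*n+m-1) * inverse a0 * a1 * t (n+1) m N * t (n-1) m N
       - q powi (n+m) * a0 * inverse a2 * t (n+1) (m+1) N * t (n-1) (m-1) N = 0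
   \<and> (q powi (-8*n+4*m-4) * a0 powi (-4) * a1 ^ 4 - q powi (4*n-8*m+4) * a1 powi (-4) * a2 ^ 4)
        * (t n m N) ^ 2
       - q powi (-2*n+m-1) * inverse a0 * a1 * t (n+1) m N * t (n-1) m N
       + q powi (n-2*m+1) * inverse a1 * a2 * t n (m+1) N * t n (m-1) N = 0"
    unfolding Let_def T1_def[symmetric] T2_def[symmetric] T4_def[symmetric] e1 e2 e3 e4 e5 e6
    apply (intro conjI)
    apply (rule trans[OF _ YL1])
    apply (simp add: fa_simps[OF aY] Y1 Y2 Yq tY alpha_def powi_neg)
    apply (simp add: field_simps nz Anz Bnz)
    apply algebra?
    apply (rule trans[OF _ YL2])
    apply (simp add: fa_simps[OF aY] Y1 Y2 Yq tY alpha_def powi_neg)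
    apply (simp add: field_simps nz Anz Bnz)
    apply algebra?
    apply (rule trans[OF _ YL3])
    apply (simp add: fa_simps[OF aY] Y1 Y2 Yq tY alpha_def powi_neg)
    apply (simp add: field_simps nz Anz Bnz)
    apply algebra?
    done
qed
end

theorem propositionB3:
  fixes Q :: complex
    and s :: "int \<Rightarrow> K \<Rightarrow> K"
    and p w0 w1 r :: "K \<Rightarrow> K"
  assumes Q_nz: "Q \<noteq> 0"
    and Q_generic: "\<forall>k::nat. 0 < k \<longrightarrow> Q ^ k \<noteq> 1"
    and aut: "\<forall>i\<in>{0,1,2}. field_aut (s i)" "field_aut p" "field_aut w0" "field_aut w1" "field_aut r"
    and s_alpha_i: "\<forall>i\<in>{0,1,2}. s i (alpha Q i) = inverse (alpha Q i)"
    and s_alpha_j: "\<forall>i\<in>{0,1,2}. \<forall>j\<in>{0,1,2}. j \<noteq> i \<longrightarrow> s i (alpha Q j) = alpha Q j * alpha Q i"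
    and s_gam: "\<forall>i\<in>{0,1,2}. s i gam = gam"
    and s_tau_i: "\<forall>i\<in>{0,1,2}. s i (tau i) =
          (uu Q i * tau (i+1) * taub (i-1) + taub (i+1) * tau (i-1))
          / (cK Q powi (-1) * gam powi (-2) * alpha Q i ^ 3 * taub i)"
    and s_taub_i: "\<forall>i\<in>{0,1,2}. s i (taub i) =
          (vv Q i * taub (i+1) * tau (i-1) + tau (i+1) * taub (i-1))
          / (cK Q * gam ^ 2 * alpha Q i ^ 3 * tau i)"
    and s_tau_j: "\<forall>i\<in>{0,1,2}. \<forall>j\<in>{0,1,2}. j \<noteq> i \<longrightarrow> s i (tau j) = tau j \<and> s i (taub j) = taub j"
    and p_alpha: "\<forall>j\<in>{0,1,2}. p (alpha Q j) = alpha Q (j+1)"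
    and p_gam: "p gam = gam"
    and p_tau: "\<forall>i\<in>{0,1,2}. p (tau i) = tau (i+1) \<and> p (taub i) = taub (i+1)"
    and w0_alpha: "\<forall>j\<in>{0,1,2}. w0 (alpha Q j) = alpha Q j"
    and w0_gam: "w0 gam = inverse gam"
    and w0_tau: "\<forall>i\<in>{0,1,2}. w0 (tau i) = tau i"
    and w0_taub: "\<forall>i\<in>{0,1,2}. w0 (taub i) =
          alpha Q (i+1) ^ 2 * (taub i * tau (i+1) * tau (i+2) + uu Q (i-1) * tau i * taub (i+1) * tau (i+2)
             + inverse (uu Q (i+1)) * tau i * tau (i+1) * taub (i+2))
          / (alpha Q (i+2) ^ 2 * taub (i+1) * taub (i+2))"
    and w1_alpha: "\<forall>j\<in>{0,1,2}. w1 (alpha Q j) = alpha Q j"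
    and w1_gam: "w1 gam = cK Q powi (-2) * inverse gam"
    and w1_taub: "\<forall>i\<in>{0,1,2}. w1 (taub i) = taub i"
    and w1_tau: "\<forall>i\<in>{0,1,2}. w1 (tau i) =
          alpha Q (i+1) ^ 2 * (tau i * taub (i+1) * taub (i+2) + vv Q (i-1) * taub i * tau (i+1) * taub (i+2)
             + inverse (vv Q (i+1)) * taub i * taub (i+1) * tau (i+2))
          / (alpha Q (i+2) ^ 2 * tau (i+1) * tau (i+2))"
    and r_alpha: "\<forall>j\<in>{0,1,2}. r (alpha Q j) = alpha Q j"
    and r_gam: "r gam = cK Q powi (-1) * inverse gam"
    and r_tau: "\<forall>i\<in>{0,1,2}. r (tau i) = taub i \<and> r (taub i) = tau i"
  shows "\<forall>n m N :: int.
     let T1 = p \<circ> s 2 \<circ> s 1; T2 = s 1 \<circ> p \<circ> s 2; T4 = r \<circ> w0;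
         t = tauNM T1 T2 T4; q = cK Q; a0 = alpha Q 0; a1 = alpha Q 1; a2 = alpha Q 2 in
     (q powi (4*n-8*m+4) * a1 powi (-4) * a2 ^ 4 - q powi (4*n+4*m) * a0 ^ 4 * a2 powi (-4))
        * (t n m N) ^ 2
       + q powi (n+m) * a0 * inverse a2 * t (n+1) (m+1) N * t (n-1) (m-1) N
       - q powi (n-2*m+1) * inverse a1 * a2 * t n (m+1) N * t n (m-1) N = 0
   \<and> (q powi (4*n+4*m) * a0 ^ 4 * a2 powi (-4) - q powi (-8*n+4*m-4) * a0 powi (-4) * a1 ^ 4)
        * (t n m N) ^ 2
       + q powi (-2*n+m-1) * inverse a0 * a1 * t (n+1) m N * t (n-1) m N
       - q powi (n+m) * a0 * inverse a2 * t (n+1) (m+1) N * t (n-1) (m-1) N = 0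
   \<and> (q powi (-8*n+4*m-4) * a0 powi (-4) * a1 ^ 4 - q powi (4*n-8*m+4) * a1 powi (-4) * a2 ^ 4)
        * (t n m N) ^ 2
       - q powi (-2*n+m-1) * inverse a0 * a1 * t (n+1) m N * t (n-1) m N
       + q powi (n-2*m+1) * inverse a1 * a2 * t n (m+1) N * t n (m-1) N = 0"
proof -
  interpret PB Q s p w0 w1 r
    by (rule PB.intro) (fact assms)+
  show ?thesis by (rule mainthm)
qed

end
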